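(* For every $k\in\mathbb{N}$ and every $\ell\in\{1,\dots,N\}$, \[\mathrm{mR}(\lambda^k_\ell)\le\mathcal{O}\big(|V|^{(|V|+3)(|\Pi|+2)}\big)\quad\text{and}\quad\mathrm{mR}(\lambda^k_{\ge\ell})\le\mathcal{O}\big(|V|^{(|V|+3)(|\Pi|+2)}\big).\]
   Context: Let $\mathcal{G}$ be a quantitative reachability game on an arena $G=(\Pi,V,(V_i)_{i\in\Pi},E)$ (finite player set $\Pi$, finite vertex set $V$ with $|V|\ge2$, $|\Pi|\le|V|$, partition $(V_i)$, every vertex has a successor) with targets $F_i\subseteq V$ and costs $\mathrm{Cost}_i(\rho)=$ least $k$ with $\rho_k\in F_i$ (or $+\infty$); $v_0\in V$. Extended game: arena $X$ with vertices $V^X=V\times2^\Pi$, edges $((v,I),(v',I'))\in E^X$ iff $(v,v')\in E$ and $I'=I\cup\{i:v'\in F_i\}$, $(v,I)\in V^X_i$ iff $v\in V_i$, targets $F^X_i=\{(v,I):i\in I\}$ with corresponding costs; $x_0=(v_0,\{i:v_0\in F_i\})$; $I(u)$ is the second component. $\mathcal{I}$ is the set of $I$ with some $(v,I)$ reachable from $x_0$, $N=|\mathcal{I}|$, $J_1<\dots<J_N$ a fixed total order of $\mathcal{I}$ extending $I<I'$ iff $I\ne I'$ and some $(v',I')$ is reachable from some $(v,I)$. $V^{J_n}=\{(v,J_n):v\in V\}$, $V^{\ge J_n}=\bigcup_{m\ge n}V^{J_m}$. Labelings: for $\lambda:V^X\to\mathbb{N}\cup\{+\infty\}$, a play $\rho$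 of $X$ is $\lambda$-consistent if $\mathrm{Cost}_i(\rho_{\ge n})\le\lambda(\rho_n)$ whenever $\rho_n\in V^X_i$. $\lambda^0(u)=0$ if $u\in V^X_i$ and $i\in I(u)$, else $+\infty$. The update of $\lambda^k$ w.r.t. $V^{\ge J_n}$ keeps values outside $V^{\ge J_n}$ and for $u\in V^{\ge J_n}\cap V^X_i$ sets $\lambda^{k+1}(u)=0$ if $i\in I(u)$, otherwise $1+\min_{(u,u')\in E^X}\sup\{\mathrm{Cost}_i(\rho):\rho$ a $\lambda^k$-consistent play from $u'\}$ ($1+(+\infty)=+\infty$). The sequence $(\lambda^k)$ is generated by $n_0=N$, $\lambda^{k+1}=$ update of $\lambda^k$ w.r.t. $V^{\ge J_{n_k}}$, $n_{k+1}=n_k-1$ if $\lambda^{k+1}=\lambda^k$ and $n_k>1$, else $n_{k+1}=n_k$. $\mathrm{mR}(f)$ is the maximum of the finite values of $f$ ($0$ if none); $\lambda^k_\ell$ and $\lambda^k_{\ge\ell}$ are the restrictions of $\lambda^k$ to $V^{J_\ell}$ and $V^{\ge J_\ell}$. The $\mathcal{O}$ is with respect to the game parameters $|V|,|\Pi|$. *)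

theory Defs
  imports Main "HOL-Library.Extended_Nat"
begin

record qgame =
  players :: "nat set"
  verts   :: "nat set"
  part    :: "nat \<Rightarrow> nat set"
  edges   :: "(nat \<times> nat) set"
  targ    :: "nat \<Rightarrow> nat set"
  init    :: nat

definition wf_game :: "qgame \<Rightarrow> bool" where
  "wf_game G \<longleftrightarrow>
     finite (players G) \<and> finite (verts G) \<and> card (verts G) \<ge> 2 \<and>
     card (players G) \<le> card (verts G) \<and>
     (\<forall>i\<in>players G. part G i \<subseteq> verts G) \<and>
     (\<forall>i\<in>players G. \<forall>j\<in>players G. i \<noteq> j \<longrightarrow> part G i \<inter> part G j = {}) \<and>
     (\<Union>i\<in>players G. part G i) = verts G \<and>
     edges G \<subseteq> verts G \<times> verts G \<and>
     (\<forall>v\<in>verts G. \<exists>v'. (v, v') \<in> edges G) \<and>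
     (\<forall>i\<in>players G. targ G i \<subseteq> verts G) \<and>
     init G \<in> verts G"

type_synonym xvert = "nat \<times> nat set"

definition XV :: "qgame \<Rightarrow> xvert set" where
  "XV G = verts G \<times> Pow (players G)"

definition XE :: "qgame \<Rightarrow> (xvert \<times> xvert) set" where
  "XE G = {((v, I), (v', I')). (v, v') \<in> edges G \<and> I \<subseteq> players G \<and>
                               I' = I \<union> {i \<in> players G. v' \<in> targ G i}}"

definition XVi :: "qgame \<Rightarrow> nat \<Rightarrow> xvert set" where
  "XVi G i = {(v, I). v \<in> part G i \<and> I \<subseteq> players G}"

definition x0 :: "qgame \<Rightarrow> xvert" where
  "x0 G = (init G, {i \<in> players G. init G \<in> targ G i})"

definition owner :: "qgame \<Rightarrow> nat \<Rightarrow> nat" where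
  "owner G v = (THE i. i \<in> players G \<and> v \<in> part G i)"

definition is_play :: "qgame \<Rightarrow> (nat \<Rightarrow> xvert) \<Rightarrow> bool" where
  "is_play G \<rho> \<longleftrightarrow> (\<forall>n. (\<rho> n, \<rho> (Suc n)) \<in> XE G)"

definition xcost :: "nat \<Rightarrow> (nat \<Rightarrow> xvert) \<Rightarrow> enat" where
  "xcost i \<rho> = (if \<exists>k. i \<in> snd (\<rho> k) then enat (LEAST k. i \<in> snd (\<rho> k)) else \<infinity>)"

definition consistent :: "qgame \<Rightarrow> (xvert \<Rightarrow> enat) \<Rightarrow> (nat \<Rightarrow> xvert) \<Rightarrow> bool" where
  "consistent G lam \<rho> \<longleftrightarrow>
     (\<forall>n. \<forall>i\<in>players G. \<rho> n \<in> XVi G i \<longrightarrow> xcost i (\<lambda>k. \<rho> (n + k)) \<le> lam (\<rho> n))"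

definition Reach :: "qgame \<Rightarrow> xvert set" where
  "Reach G = {u. (x0 G, u) \<in> (XE G)\<^sup>*}"

definition Iset :: "qgame \<Rightarrow> nat set set" where
  "Iset G = snd ` Reach G"

definition Nidx :: "qgame \<Rightarrow> nat" where
  "Nidx G = card (Iset G)"

definition valid_order :: "qgame \<Rightarrow> (nat \<Rightarrow> nat set) \<Rightarrow> bool" where
  "valid_order G J \<longleftrightarrow> bij_betw J {1..Nidx G} (Iset G) \<and>
     (\<forall>m\<in>{1..Nidx G}. \<forall>n\<in>{1..Nidx G}.
        J m \<noteq> J n \<and> (\<exists>v v'. ((v, J m), (v', J n)) \<in> (XE G)\<^sup>*) \<longrightarrow> m < n)"

definition VJ :: "qgame \<Rightarrow> (nat \<Rightarrow> nat set) \<Rightarrow> nat \<Rightarrow> xvert set" where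
  "VJ G J n = {(v, J n) | v. v \<in> verts G}"

definition Vge :: "qgame \<Rightarrow> (nat \<Rightarrow> nat set) \<Rightarrow> nat \<Rightarrow> xvert set" where
  "Vge G J n = (\<Union>m\<in>{n..Nidx G}. VJ G J m)"

definition lam0 :: "qgame \<Rightarrow> xvert \<Rightarrow> enat" where
  "lam0 G u = (if u \<in> XV G \<and> owner G (fst u) \<in> snd u then 0 else \<infinity>)"

text \<open>Update of lam with respect to the vertex set S (= V^{\<ge> J_n}).\<close>
definition upd :: "qgame \<Rightarrow> (xvert \<Rightarrow> enat) \<Rightarrow> xvert set \<Rightarrow> xvert \<Rightarrow> enat" where
  "upd G lam S u =
     (if u \<in> S then
        (let i = owner G (fst u) in
          if i \<in> snd u then 0
          else 1 + (INF u'\<in>{u'. (u, u') \<in> XE G}.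
                      SUP \<rho>\<in>{\<rho>. is_play G \<rho> \<and> \<rho> 0 = u' \<and> consistent G lam \<rho>}. xcost i \<rho>))
      else lam u)"

primrec lseq :: "qgame \<Rightarrow> (nat \<Rightarrow> nat set) \<Rightarrow> nat \<Rightarrow> (xvert \<Rightarrow> enat) \<times> nat" where
  "lseq G J 0 = (lam0 G, Nidx G)"
| "lseq G J (Suc k) =
     (let l = fst (lseq G J k); n = snd (lseq G J k); l' = upd G l (Vge G J n)
      in (l', if l' = l \<and> n > 1 then n - 1 else n))"

definition lam :: "qgame \<Rightarrow> (nat \<Rightarrow> nat set) \<Rightarrow> nat \<Rightarrow> xvert \<Rightarrow> enat" where
  "lam G J k = fst (lseq G J k)"

definition mR :: "(xvert \<Rightarrow> enat) \<Rightarrow> xvert set \<Rightarrow> nat" where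
  "mR f S = Max (insert 0 {the_enat (f u) | u. u \<in> S \<and> f u \<noteq> \<infinity>})"

end

theory Submission
  imports Defs
begin


lemma XE_snd: "(x,y) \<in> XE G \<Longrightarrow> snd x \<subseteq> snd y \<and> snd x \<subseteq> players G \<and> snd y \<subseteq> players G"
  by (cases x; cases y) (auto simp: XE_def)

lemma XE_XV: "wf_game G \<Longrightarrow> (x,y) \<in> XE G \<Longrightarrow> x \<in> XV G \<and> y \<in> XV G"
  by (cases x; cases y) (auto simp: XE_def XV_def wf_game_def)

lemma play_XV: "wf_game G \<Longrightarrow> is_play G \<rho> \<Longrightarrow> \<rho> n \<in> XV G"
  using XE_XV unfolding is_play_def by blast

lemma play_mono: "is_play G \<rho> \<Longrightarrow> m \<le> n \<Longrightarrow> snd (\<rho> m) \<subseteq> snd (\<rho> n)"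
  using lift_Suc_mono_le[of "\<lambda>n. snd (\<rho> n)"] XE_snd unfolding is_play_def by blast

lemma xcost_le: "j \<in> snd (\<rho> s) \<Longrightarrow> xcost j \<rho> \<le> enat s"
  unfolding xcost_def by (auto intro: Least_le)

lemma xcost_enat: "xcost j \<rho> = enat c \<Longrightarrow> j \<in> snd (\<rho> c) \<and> (\<forall>s<c. j \<notin> snd (\<rho> s))"
  unfolding xcost_def by (auto split: if_splits intro: LeastI dest: not_less_Least)

lemma xcost_inf: "(\<And>k. j \<notin> snd (\<rho> k)) \<Longrightarrow> xcost j \<rho> = \<infinity>"
  unfolding xcost_def by auto

lemma finite_XV: "wf_game G \<Longrightarrow> finite (XV G)"
  by (auto simp: XV_def wf_game_def)

lemma pump:
  assumes pl: "is_play G \<rho>" and cons: "consistent G lm \<rho>"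
  and ab: "a < b" and bT: "\<forall>s\<le>b. i \<notin> snd (\<rho> s)" and eq: "\<rho> a = \<rho> b"
  and good: "\<forall>q\<le>b. \<forall>j\<in>players G. \<rho> q \<in> XVi G j \<and> lm (\<rho> q) \<noteq> \<infinity> \<longrightarrow> j \<in> snd (\<rho> b)"
  shows "\<exists>\<rho>'. is_play G \<rho>' \<and> \<rho>' 0 = \<rho> 0 \<and> consistent G lm \<rho>' \<and> xcost i \<rho>' = \<infinity>"
proof -
  define p where "p = b - a"
  define g where "g n = (if n < a then n else a + (n - a) mod p)" for n
  have p0: "p > 0" using ab by (simp add: p_def)
  have g_lt: "g n < b" for n
  proof (cases "n < a")
    case True then show ?thesis using ab by (simp add: g_def)
  next
    case False
    have "(n - a) mod p < p" using p0 by simp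
    moreover have "a + p = b" using ab by (simp add: p_def)
    moreover have "g n = a + (n - a) mod p" using False by (simp add: g_def)
    ultimately show ?thesis by linarith
  qed
  have g_ge: "a \<le> g n" if "a \<le> n" for n using that by (simp add: g_def)
  have sndg: "snd (\<rho> (g n)) = snd (\<rho> a)" if "a \<le> n" for n
    using play_mono[OF pl g_ge[OF that]] play_mono[OF pl, of "g n" b] g_lt[of n] eq by auto
  have gsmall: "g n = n" if "n \<le> a" for n
    using that by (cases "n < a") (auto simp: g_def)
  have play: "is_play G (\<rho> \<circ> g)"
    unfolding is_play_def
  proof
    fix n
    show "((\<rho> \<circ> g) n, (\<rho> \<circ> g) (Suc n)) \<in> XE G"
    proof (cases "Suc n \<le> a")
      case True
      then show ?thesis using gsmall[of n] gsmall[of "Suc n"] pl by (simp add: is_play_def)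
    next
      case False
      then have na: "a \<le> n" by simp
      have gn: "g n = a + (n - a) mod p" using na by (simp add: g_def)
      have gs: "g (Suc n) = a + Suc (n - a) mod p" using na by (simp add: g_def Suc_diff_le)
      show ?thesis
      proof (cases "Suc ((n - a) mod p) = p")
        case True
        then have "g (Suc n) = a" using gs by (simp add: mod_Suc)
        moreover have "g n = b - 1" using gn True ab by (simp add: p_def)
        moreover have "(\<rho> (b - 1), \<rho> b) \<in> XE G" using pl ab unfolding is_play_def
          by (metis Suc_diff_1 gr_implies_not0 not_gr0)
        ultimately show ?thesis using eq by simp
      next
        case False
        then have "g (Suc n) = Suc (g n)" using gs gn by (simp add: mod_Suc)
        then show ?thesis using pl by (simp add: is_play_def)
      qed
    qed
  qed
  have g0: "g 0 = 0" using gsmall[of 0] by simp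
  have mono: "\<And>m n. m \<le> n \<Longrightarrow> snd (\<rho> m) \<subseteq> snd (\<rho> n)" using play_mono[OF pl] .
  have noi: "xcost i (\<rho> \<circ> g) = \<infinity>"
    by (rule xcost_inf) (use bT g_lt less_imp_le in auto)
  have consg: "consistent G lm (\<rho> \<circ> g)"
    unfolding consistent_def
  proof (intro allI ballI impI)
    fix n j
    assume jP: "j \<in> players G" and X: "(\<rho> \<circ> g) n \<in> XVi G j"
    show "xcost j (\<lambda>k. (\<rho> \<circ> g) (n + k)) \<le> lm ((\<rho> \<circ> g) n)"
    proof (cases "lm (\<rho> (g n)) = \<infinity>")
      case True then show ?thesis by simp
    next
      case fin: False
      have jb: "j \<in> snd (\<rho> a)" using good jP X fin g_lt[of n] eq by (metis comp_apply less_imp_le)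
      show ?thesis
      proof (cases "a \<le> n")
        case True
        then have "j \<in> snd ((\<rho> \<circ> g) (n + 0))" using sndg jb by simp
        then have "xcost j (\<lambda>k. (\<rho> \<circ> g) (n + k)) \<le> enat 0" by (rule xcost_le)
        then show ?thesis by (simp add: zero_enat_def[symmetric])
      next
        case False
        then have na: "n + (a - n) = a" by simp
        from False have gn: "g n = n" using gsmall by simp
        have c: "xcost j (\<lambda>k. \<rho> (n + k)) \<le> lm (\<rho> n)"
          using cons jP X gn unfolding consistent_def by auto
        then obtain s where s: "xcost j (\<lambda>k. \<rho> (n + k)) = enat s"
          using fin gn by (cases "xcost j (\<lambda>k. \<rho> (n + k))") auto
        have js: "j \<in> snd (\<rho> (n + s))" using xcost_enat[OF s] by simp
        have "xcost j (\<lambda>k. (\<rho> \<circ> g) (n + k)) \<le> enat s"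
        proof (cases "n + s \<le> a")
          case True
          then show ?thesis using js gsmall[of "n+s"] by (intro xcost_le) simp
        next
          case False
          have "j \<in> snd ((\<rho> \<circ> g) (n + (a - n)))" using jb gsmall[of a] na by simp
          then have "xcost j (\<lambda>k. (\<rho> \<circ> g) (n + k)) \<le> enat (a - n)" by (rule xcost_le)
          also have "\<dots> \<le> enat s" using False by simp
          finally show ?thesis .
        qed
        also have "\<dots> \<le> lm ((\<rho> \<circ> g) n)" using c s gn by simp
        finally show ?thesis .
      qed
    qed
  qed
  show ?thesis using play consg noi g0 by (intro exI[of _ "\<rho> \<circ> g"]) simp
qed

lemma count_bound:
  assumes wf: "wf_game G" and pl: "is_play G \<rho>" and cons: "consistent G lm \<rho>"
  and T: "xcost i \<rho> = enat T"
  and Bnd: "\<forall>q. lm (\<rho> q) \<noteq> \<infinity> \<longrightarrow> lm (\<rho> q) \<le> enat B"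
  and noinf: "\<forall>\<rho>'. is_play G \<rho>' \<and> \<rho>' 0 = \<rho> 0 \<and> consistent G lm \<rho>' \<longrightarrow> xcost i \<rho>' \<noteq> \<infinity>"
  shows "T \<le> card (XV G) + card (players G) * B"
proof -
  have iT: "\<forall>s<T. i \<notin> snd (\<rho> s)" using xcost_enat[OF T] by simp
  define good where "good t \<longleftrightarrow> (\<forall>q\<le>t. \<forall>j\<in>players G. \<rho> q \<in> XVi G j \<and> lm (\<rho> q) \<noteq> \<infinity> \<longrightarrow> j \<in> snd (\<rho> t))" for t
  define Gs where "Gs = {t. t < T \<and> good t}"
  define Bs where "Bs = {t. t < T \<and> \<not> good t}"
  have nodup: False if H: "a < b" "a \<in> Gs" "b \<in> Gs" "\<rho> a = \<rho> b" for a b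
  proof -
    have "\<forall>s\<le>b. i \<notin> snd (\<rho> s)" using iT H(3) by (auto simp: Gs_def)
    moreover have "good b" using H(3) by (simp add: Gs_def)
    ultimately obtain \<rho>' where "is_play G \<rho>' \<and> \<rho>' 0 = \<rho> 0 \<and> consistent G lm \<rho>' \<and> xcost i \<rho>' = \<infinity>"
      using pump[OF pl cons H(1) _ H(4)] unfolding good_def by blast
    then show False using noinf by blast
  qed
  have inj: "inj_on \<rho> Gs"
  proof (rule inj_onI)
    fix a b assume "a \<in> Gs" "b \<in> Gs" "\<rho> a = \<rho> b"
    then show "a = b" using nodup[of a b] nodup[of b a] by (metis linorder_neqE_nat)
  qed
  have cG: "card Gs \<le> card (XV G)"
    using card_inj_on_le[OF inj _ finite_XV[OF wf]] play_XV[OF wf pl] by blast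
  define c where "c j = (LEAST c. j \<in> snd (\<rho> c))" for j
  have BsU: "Bs \<subseteq> (\<Union>j\<in>players G. {c j - B..<c j})"
  proof
    fix t assume "t \<in> Bs"
    then obtain q j where q: "q \<le> t" "j \<in> players G" "\<rho> q \<in> XVi G j" "lm (\<rho> q) \<noteq> \<infinity>" "j \<notin> snd (\<rho> t)"
      by (auto simp: Bs_def good_def)
    have "xcost j (\<lambda>k. \<rho> (q + k)) \<le> lm (\<rho> q)" using cons q unfolding consistent_def by blast
    also have "\<dots> \<le> enat B" using Bnd q by blast
    finally obtain s where s: "xcost j (\<lambda>k. \<rho> (q + k)) = enat s" "s \<le> B"
      by (metis enat_ile enat_ord_simps(1))
    have js: "j \<in> snd (\<rho> (q + s))" using xcost_enat[OF s(1)] by simp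
    have c1: "c j \<le> q + s" unfolding c_def using js by (rule Least_le)
    have c2: "j \<in> snd (\<rho> (c j))" unfolding c_def using js by (rule LeastI)
    have "t < c j"
    proof (rule ccontr)
      assume "\<not> t < c j"
      then show False using play_mono[OF pl, of "c j" t] c2 q(5) by auto
    qed
    moreover have "c j - B \<le> t" using c1 s(2) q(1) by linarith
    ultimately show "t \<in> (\<Union>j\<in>players G. {c j - B..<c j})" using q(2) by auto
  qed
  have fP: "finite (players G)" using wf by (simp add: wf_game_def)
  have "card Bs \<le> card (\<Union>j\<in>players G. {c j - B..<c j})"
    by (rule card_mono[OF _ BsU]) (use fP in auto)
  also have "\<dots> \<le> (\<Sum>j\<in>players G. card {c j - B..<c j})" by (rule card_UN_le[OF fP])
  also have "\<dots> \<le> (\<Sum>j\<in>players G. B)" by (rule sum_mono) simp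
  also have "\<dots> = card (players G) * B" by simp
  finally have cB: "card Bs \<le> card (players G) * B" .
  have "T = card (Gs \<union> Bs)"
  proof -
    have "Gs \<union> Bs = {..<T}" by (auto simp: Gs_def Bs_def)
    then show ?thesis by simp
  qed
  also have "\<dots> \<le> card Gs + card Bs" by (rule card_Un_le)
  finally show ?thesis using cG cB by linarith
qed



lemma upd_bound:
  assumes wf: "wf_game G" and uS: "u \<in> S" and own: "owner G (fst u) \<notin> snd u"
  and fin: "upd G lm S u \<noteq> \<infinity>"
  and Bnd: "\<forall>w\<in>XV G. snd u \<subseteq> snd w \<and> lm w \<noteq> \<infinity> \<longrightarrow> lm w \<le> enat B"
  shows "upd G lm S u \<le> enat (1 + card (XV G) + card (players G) * B)"
proof -
  define i where "i = owner G (fst u)"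
  define Pl where "Pl u' = {\<rho>. is_play G \<rho> \<and> \<rho> 0 = u' \<and> consistent G lm \<rho>}" for u'
  define Sp where "Sp u' = (SUP \<rho>\<in>Pl u'. xcost i \<rho>)" for u'
  have eq: "upd G lm S u = 1 + (INF u'\<in>{u'. (u,u') \<in> XE G}. Sp u')"
    using uS own by (simp add: upd_def Let_def i_def Sp_def Pl_def)
  have "(INF u'\<in>{u'. (u,u') \<in> XE G}. Sp u') \<noteq> \<infinity>"
  proof
    assume "(INF u'\<in>{u'. (u,u') \<in> XE G}. Sp u') = \<infinity>"
    then have "upd G lm S u = \<infinity>" using eq by simp
    then show False using fin by simp
  qed
  then obtain u' where u': "(u,u') \<in> XE G" "Sp u' \<noteq> \<infinity>"
    by (metis (mono_tags, lifting) INF_top_conv mem_Collect_eq top_enat_def)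
  have each: "xcost i \<rho> \<le> enat (card (XV G) + card (players G) * B)" if r: "\<rho> \<in> Pl u'" for \<rho>
  proof -
    have nf: "xcost i \<rho>' \<noteq> \<infinity>" if "\<rho>' \<in> Pl u'" for \<rho>'
    proof
      assume "xcost i \<rho>' = \<infinity>"
      then have "\<infinity> \<le> Sp u'" unfolding Sp_def using SUP_upper[OF that, of "xcost i"] by simp
      then show False using u'(2) by (simp add: top_enat_def[symmetric] top_unique)
    qed
    obtain T where T: "xcost i \<rho> = enat T" using nf[OF r] by auto
    have pl: "is_play G \<rho>" and r0: "\<rho> 0 = u'" and cons: "consistent G lm \<rho>" using r by (auto simp: Pl_def)
    have "T \<le> card (XV G) + card (players G) * B"
    proof (rule count_bound[OF wf pl cons T])
      show "\<forall>q. lm (\<rho> q) \<noteq> \<infinity> \<longrightarrow> lm (\<rho> q) \<le> enat B"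
      proof (intro allI impI)
        fix q assume "lm (\<rho> q) \<noteq> \<infinity>"
        moreover have "\<rho> q \<in> XV G" using play_XV[OF wf pl] .
        moreover have "snd u \<subseteq> snd (\<rho> q)"
          using XE_snd[OF u'(1)] play_mono[OF pl, of 0 q] r0 by auto
        ultimately show "lm (\<rho> q) \<le> enat B" using Bnd by blast
      qed
      show "\<forall>\<rho>'. is_play G \<rho>' \<and> \<rho>' 0 = \<rho> 0 \<and> consistent G lm \<rho>' \<longrightarrow> xcost i \<rho>' \<noteq> \<infinity>"
        using nf r0 by (auto simp: Pl_def)
    qed
    then show ?thesis using T by simp
  qed
  have "(INF u'\<in>{u'. (u,u') \<in> XE G}. Sp u') \<le> Sp u'" using u'(1) by (intro INF_lower) simp
  also have "\<dots> \<le> enat (card (XV G) + card (players G) * B)" unfolding Sp_def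
    by (rule SUP_least) (rule each)
  finally have "upd G lm S u \<le> 1 + enat (card (XV G) + card (players G) * B)"
    unfolding eq by (rule add_left_mono)
  then show ?thesis by (simp add: one_enat_def)
qed

lemma lam_0: "lam G J 0 = lam0 G" by (simp add: lam_def)

lemma lam_Suc: "lam G J (Suc k) = upd G (lam G J k) (Vge G J (snd (lseq G J k)))"
  by (simp add: lam_def Let_def)

lemma n_Suc_le: "snd (lseq G J (Suc k)) \<le> snd (lseq G J k)"
  by (simp add: Let_def)

lemma S_mono: "Vge G J (snd (lseq G J k)) \<subseteq> Vge G J (snd (lseq G J (Suc k)))"
proof -
  have "\<And>n n'. n' \<le> n \<Longrightarrow> Vge G J n \<subseteq> Vge G J n'" unfolding Vge_def
    by (intro UN_mono) auto
  then show ?thesis using n_Suc_le[of G J k] by blast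
qed

lemma upd_out: "u \<notin> S \<Longrightarrow> upd G lm S u = lm u" by (simp add: upd_def)

lemma upd_own: "u \<in> S \<Longrightarrow> owner G (fst u) \<in> snd u \<Longrightarrow> upd G lm S u = 0"
  by (simp add: upd_def Let_def)

lemma outside: "u \<notin> Vge G J (snd (lseq G J k)) \<Longrightarrow> lam G J k u = lam0 G u"
proof (induction k)
  case 0 then show ?case by (simp add: lam_0)
next
  case (Suc k)
  then have "u \<notin> Vge G J (snd (lseq G J k))" using S_mono by blast
  then show ?case using Suc by (simp add: lam_Suc upd_out)
qed

lemma upd_mono:
  assumes "u \<in> S" "u \<in> S'" "\<And>x. lm' x \<le> lm x"
  shows "upd G lm' S' u \<le> upd G lm S u"
proof (cases "owner G (fst u) \<in> snd u")
  case True then show ?thesis using assms by (simp add: upd_own)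
next
  case False
  have cs: "consistent G lm \<rho>" if "consistent G lm' \<rho>" for \<rho>
    using that assms(3) unfolding consistent_def by (meson order_trans)
  show ?thesis using assms False unfolding upd_def Let_def
    apply simp
    apply (rule INF_mono')
    apply (rule SUP_subset_mono)
    using cs apply blast
    apply simp
    done
qed

lemma lam_mono: "lam G J (Suc k) u \<le> lam G J k u"
proof (induction k arbitrary: u)
  case 0
  show ?case
  proof (cases "u \<in> Vge G J (snd (lseq G J 0))")
    case False then show ?thesis by (simp add: lam_Suc upd_out)
  next
    case True
    show ?thesis
    proof (cases "owner G (fst u) \<in> snd u")
      case True2: True
      then show ?thesis using True by (simp add: lam_Suc upd_own)
    next
      case False
      then show ?thesis by (simp add: lam_0 lam0_def)
    qed
  qed
next
  case (Suc k)
  show ?case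
  proof (cases "u \<in> Vge G J (snd (lseq G J (Suc k)))")
    case False then show ?thesis by (simp add: lam_Suc[of G J "Suc k"] upd_out)
  next
    case True
    show ?thesis
    proof (cases "owner G (fst u) \<in> snd u")
      case True2: True
      then show ?thesis using True by (simp add: lam_Suc[of G J "Suc k"] upd_own)
    next
      case False
      show ?thesis
      proof (cases "u \<in> Vge G J (snd (lseq G J k))")
        case True3: True
        show ?thesis unfolding lam_Suc[of G J "Suc k"] lam_Suc[of G J k]
          by (rule upd_mono[OF True3 True]) (use Suc.IH lam_Suc in auto)
      next
        case False3: False
        then have "lam G J (Suc k) u = lam0 G u" by (simp add: lam_Suc upd_out outside)
        then show ?thesis using False by (simp add: lam0_def)
      qed
    qed
  qed
qed



definition Fb :: "nat \<Rightarrow> nat \<Rightarrow> nat \<Rightarrow> nat" where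
  "Fb a p m = ((\<lambda>x. a + p * x) ^^ m) 0"

lemma Fb_0: "Fb a p 0 = 0" by (simp add: Fb_def)
lemma Fb_Suc: "Fb a p (Suc m) = a + p * Fb a p m" by (simp add: Fb_def)

lemma Fb_step: "Fb a p m \<le> Fb a p (Suc m)"
proof (induction m)
  case 0 then show ?case by (simp add: Fb_0)
next
  case (Suc m) then show ?case by (simp add: Fb_Suc)
qed

lemma Fb_mono: "m \<le> m' \<Longrightarrow> Fb a p m \<le> Fb a p m'"
  using lift_Suc_mono_le[of "Fb a p", OF Fb_step] by blast

lemma Fb_le: assumes "p \<le> n" "1 \<le> n" shows "Fb a p m \<le> m * a * n ^ m"
proof (induction m)
  case 0 then show ?case by (simp add: Fb_0)
next
  case (Suc m)
  have "Fb a p (Suc m) = a + p * Fb a p m" by (simp add: Fb_Suc)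
  also have "\<dots> \<le> a + n * (m * a * n ^ m)" using Suc assms by (intro add_left_mono mult_le_mono) auto
  also have "\<dots> \<le> a * n ^ Suc m + m * a * n ^ Suc m"
  proof -
    have "1 \<le> n ^ Suc m" using assms by simp
    then have "a \<le> a * n ^ Suc m" by simp
    moreover have "n * (m * a * n ^ m) = m * a * n ^ Suc m" by (simp add: algebra_simps)
    ultimately show ?thesis by linarith
  qed
  also have "\<dots> = Suc m * a * n ^ Suc m" by (simp add: algebra_simps)
  finally show ?case .
qed

lemma numeric:
  fixes n p :: nat
  assumes n2: "2 \<le> n" and pn: "p \<le> n"
  shows "Fb (1 + n * 2 ^ p) p ((p + 1) * n) \<le> n ^ ((n + 3) * (p + 2))"
proof -
  define a where "a = 1 + n * 2 ^ p"
  define m where "m = (p + 1) * n"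
  have "Fb a p m \<le> m * a * n ^ m" using Fb_le[of p n a m] pn n2 by simp
  also have "\<dots> \<le> n ^ 3 * n ^ (p + 2) * n ^ m"
  proof -
    have "2 ^ p \<le> n ^ p" using n2 by (simp add: power_mono)
    then have "n * 2 ^ p \<le> n ^ (p + 1)" by simp
    moreover have "2 * n ^ (p + 1) \<le> n ^ (p + 2)" using n2 by simp
    moreover have "1 \<le> n ^ (p + 1)" using n2 by simp
    ultimately have a: "a \<le> n ^ (p + 2)" unfolding a_def by linarith
    have "p + 1 \<le> n * n" using pn n2 by (metis add_le_mono le_add2 mult_2 mult_le_mono1 numeral_le_one_iff order_trans semiring_norm(69)
          Suc_eq_plus1 le_trans not_less_eq_eq)
    then have "m \<le> n * n * n" unfolding m_def by (rule mult_le_mono1)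
    then have mm: "m \<le> n ^ 3" by (simp add: power3_eq_cube)
    show ?thesis using a mm by (intro mult_le_mono) auto
  qed
  also have "\<dots> = n ^ (3 + (p + 2) + m)" by (simp only: power_add)
  also have "\<dots> \<le> n ^ ((n + 3) * (p + 2))"
    using n2 by (intro power_increasing) (auto simp: m_def algebra_simps)
  finally show ?thesis unfolding a_def m_def .
qed



definition Lset :: "qgame \<Rightarrow> (nat \<Rightarrow> nat set) \<Rightarrow> nat \<Rightarrow> nat set \<Rightarrow> xvert set" where
  "Lset G J k I = {x \<in> XV G. snd x = I \<and> lam G J k x \<noteq> \<infinity>}"

definition mu :: "qgame \<Rightarrow> (nat \<Rightarrow> nat set) \<Rightarrow> nat \<Rightarrow> xvert \<Rightarrow> nat" where
  "mu G J k w = (card (players G) - card (snd w)) * card (verts G) + card (Lset G J k (snd w))"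

lemma Lset_finite: "wf_game G \<Longrightarrow> finite (Lset G J k I)"
  using finite_XV by (auto simp: Lset_def)

lemma Lset_card: "wf_game G \<Longrightarrow> card (Lset G J k I) \<le> card (verts G)"
proof -
  assume wf: "wf_game G"
  have "inj_on fst (Lset G J k I)" by (auto simp: Lset_def inj_on_def prod_eq_iff)
  moreover have "fst ` Lset G J k I \<subseteq> verts G" by (auto simp: Lset_def XV_def)
  moreover have "finite (verts G)" using wf by (simp add: wf_game_def)
  ultimately show ?thesis by (rule card_inj_on_le)
qed

lemma Lset_mono: "Lset G J k I \<subseteq> Lset G J (Suc k) I"
  unfolding Lset_def using lam_mono[of G J k] by (metis (mono_tags, lifting) Collect_mono enat_ord_simps(5))

lemma main_bound:
  assumes wf: "wf_game G"
  shows "\<forall>u\<in>XV G. lam G J k u \<noteq> \<infinity> \<longrightarrow>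
           lam G J k u \<le> enat (Fb (1 + card (XV G)) (card (players G)) (mu G J k u))"
proof (induction k)
  case 0
  show ?case by (auto simp: lam_0 lam0_def zero_enat_def)
next
  case (Suc k)
  let ?a = "1 + card (XV G)" and ?p = "card (players G)" and ?n = "card (verts G)"
  show ?case
  proof (intro ballI impI)
    fix u assume uX: "u \<in> XV G" and fin: "lam G J (Suc k) u \<noteq> \<infinity>"
    have fP: "finite (players G)" using wf by (simp add: wf_game_def)
    have Lsub: "Lset G J k (snd u) \<subseteq> Lset G J (Suc k) (snd u)" by (rule Lset_mono)
    show "lam G J (Suc k) u \<le> enat (Fb ?a ?p (mu G J (Suc k) u))"
    proof (cases "lam G J k u = \<infinity>")
      case False
      have "lam G J (Suc k) u \<le> lam G J k u" by (rule lam_mono)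
      also have "\<dots> \<le> enat (Fb ?a ?p (mu G J k u))" using Suc uX False by blast
      also have "\<dots> \<le> enat (Fb ?a ?p (mu G J (Suc k) u))"
      proof -
        have "card (Lset G J k (snd u)) \<le> card (Lset G J (Suc k) (snd u))"
          by (rule card_mono[OF Lset_finite[OF wf] Lsub])
        then have "mu G J k u \<le> mu G J (Suc k) u" by (simp add: mu_def)
        then show ?thesis by (simp add: Fb_mono)
      qed
      finally show ?thesis .
    next
      case True
      let ?S = "Vge G J (snd (lseq G J k))"
      have uS: "u \<in> ?S"
      proof (rule ccontr)
        assume "u \<notin> ?S"
        then have "lam G J (Suc k) u = lam G J k u" by (simp add: lam_Suc upd_out)
        then show False using True fin by simp
      qed
      show ?thesis
      proof (cases "owner G (fst u) \<in> snd u")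
        case True
        then show ?thesis using uS by (simp add: lam_Suc upd_own zero_enat_def)
      next
        case own: False
        define m where "m = mu G J (Suc k) u"
        have uL: "u \<in> Lset G J (Suc k) (snd u)" using uX fin by (simp add: Lset_def)
        have uL0: "u \<notin> Lset G J k (snd u)" using True by (simp add: Lset_def)
        have cL1: "1 \<le> card (Lset G J (Suc k) (snd u))"
          using uL Lset_finite[OF wf] by (metis One_nat_def Suc_leI card_gt_0_iff empty_iff)
        have cL: "card (Lset G J k (snd u)) \<le> card (Lset G J (Suc k) (snd u)) - 1"
        proof -
          have "Lset G J k (snd u) \<subseteq> Lset G J (Suc k) (snd u) - {u}" using Lsub uL0 by blast
          then have "card (Lset G J k (snd u)) \<le> card (Lset G J (Suc k) (snd u) - {u})"
            by (intro card_mono) (simp add: Lset_finite[OF wf])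
          then show ?thesis using uL by (simp add: Lset_finite[OF wf])
        qed
        have m1: "1 \<le> m" using cL1 by (simp add: m_def mu_def)
        have Bnd: "\<forall>w\<in>XV G. snd u \<subseteq> snd w \<and> lam G J k w \<noteq> \<infinity> \<longrightarrow>
                     lam G J k w \<le> enat (Fb ?a ?p (m - 1))"
        proof (intro ballI impI)
          fix w assume wX: "w \<in> XV G" and h: "snd u \<subseteq> snd w \<and> lam G J k w \<noteq> \<infinity>"
          have "lam G J k w \<le> enat (Fb ?a ?p (mu G J k w))" using Suc wX h by blast
          also have "mu G J k w \<le> m - 1"
          proof (cases "snd w = snd u")
            case True
            then show ?thesis using cL cL1 by (simp add: mu_def m_def)
          next
            case False
            then have ps: "snd u \<subset> snd w" using h by blast
            have wP: "snd w \<subseteq> players G" using wX by (auto simp: XV_def)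
            have c1: "card (snd u) < card (snd w)"
              using psubset_card_mono[OF finite_subset[OF wP fP] ps] .
            have c2: "card (snd w) \<le> ?p" using card_mono[OF fP wP] .
            have "mu G J k w \<le> (?p - card (snd w)) * ?n + ?n"
              using Lset_card[OF wf] by (simp add: mu_def)
            also have "\<dots> = (?p - card (snd w) + 1) * ?n" by simp
            also have "\<dots> \<le> (?p - card (snd u)) * ?n"
              using c1 c2 by (intro mult_le_mono1) linarith
            also have "\<dots> \<le> m - 1" using cL1 by (simp add: m_def mu_def)
            finally show ?thesis .
          qed
          then have "enat (Fb ?a ?p (mu G J k w)) \<le> enat (Fb ?a ?p (m - 1))" by (simp add: Fb_mono)
          finally show "lam G J k w \<le> enat (Fb ?a ?p (m - 1))" .
        qed
        have "lam G J (Suc k) u \<le> enat (1 + card (XV G) + ?p * Fb ?a ?p (m - 1))"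
          unfolding lam_Suc by (rule upd_bound[OF wf uS own]) (use fin lam_Suc Bnd in auto)
        also have "1 + card (XV G) + ?p * Fb ?a ?p (m - 1) = Fb ?a ?p m"
          using m1 Fb_Suc[of ?a ?p "m - 1"] by simp
        finally show ?thesis by (simp add: m_def)
      qed
    qed
  qed
qed



lemma mR_le:
  assumes "finite S" "\<forall>u\<in>S. f u \<noteq> \<infinity> \<longrightarrow> f u \<le> enat K"
  shows "mR f S \<le> K"
proof -
  have sub: "{the_enat (f u) | u. u \<in> S \<and> f u \<noteq> \<infinity>} \<subseteq> (\<lambda>u. the_enat (f u)) ` S" by blast
  have fin: "finite {the_enat (f u) | u. u \<in> S \<and> f u \<noteq> \<infinity>}"
    using finite_subset[OF sub] assms(1) by blast
  show ?thesis unfolding mR_def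
  proof (subst Max_le_iff)
    show "finite (insert 0 {the_enat (f u) |u. u \<in> S \<and> f u \<noteq> \<infinity>})" using fin by simp
    show "\<forall>a\<in>insert 0 {the_enat (f u) |u. u \<in> S \<and> f u \<noteq> \<infinity>}. a \<le> K"
    proof
      fix a assume "a \<in> insert 0 {the_enat (f u) |u. u \<in> S \<and> f u \<noteq> \<infinity>}"
      then show "a \<le> K"
      proof
        assume "a \<in> {the_enat (f u) |u. u \<in> S \<and> f u \<noteq> \<infinity>}"
        then obtain u where u: "u \<in> S" "f u \<noteq> \<infinity>" "a = the_enat (f u)" by blast
        then obtain c where c: "f u = enat c" by auto
        then show "a \<le> K" using assms(2) u by auto
      qed simp
    qed
  qed simp
qed

lemma lam_bound:
  assumes wf: "wf_game G" and uX: "u \<in> XV G" and fin: "lam G J k u \<noteq> \<infinity>"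
  shows "lam G J k u \<le> enat (card (verts G) ^ ((card (verts G) + 3) * (card (players G) + 2)))"
proof -
  let ?a = "1 + card (XV G)" and ?p = "card (players G)" and ?n = "card (verts G)"
  have cXV: "card (XV G) = ?n * 2 ^ ?p" using wf
    by (simp add: XV_def card_cartesian_product card_Pow wf_game_def)
  have "lam G J k u \<le> enat (Fb ?a ?p (mu G J k u))" using main_bound[OF wf] uX fin by blast
  also have "mu G J k u \<le> (?p + 1) * ?n"
  proof -
    have "mu G J k u \<le> ?p * ?n + ?n" unfolding mu_def
      using Lset_card[OF wf, of J k "snd u"] by (intro add_le_mono mult_le_mono1) auto
    then show ?thesis by simp
  qed
  then have "enat (Fb ?a ?p (mu G J k u)) \<le> enat (Fb ?a ?p ((?p + 1) * ?n))" by (simp add: Fb_mono)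
  also have "Fb ?a ?p ((?p + 1) * ?n) \<le> ?n ^ ((?n + 3) * (?p + 2))"
    unfolding cXV by (rule numeric) (use wf in \<open>auto simp: wf_game_def\<close>)
  finally show ?thesis by simp
qed

lemma Reach_snd: "(x0 G, u) \<in> (XE G)\<^sup>* \<Longrightarrow> snd u \<subseteq> players G"
proof (induction rule: rtrancl_induct)
  case base then show ?case by (auto simp: x0_def)
next
  case (step y z) then show ?case using XE_snd by blast
qed

lemma VJ_sub:
  assumes vo: "valid_order G J" and m: "m \<in> {1..Nidx G}"
  shows "VJ G J m \<subseteq> XV G" "finite (verts G) \<Longrightarrow> finite (VJ G J m)"
proof -
  have "J m \<in> Iset G" using vo m by (auto simp: valid_order_def bij_betw_def)
  then have "J m \<subseteq> players G" using Reach_snd[of G] unfolding Iset_def Reach_def by force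
  then show "VJ G J m \<subseteq> XV G" by (auto simp: VJ_def XV_def)
  show "finite (verts G) \<Longrightarrow> finite (VJ G J m)"
  proof -
    assume "finite (verts G)"
    moreover have "VJ G J m = (\<lambda>v. (v, J m)) ` verts G" by (auto simp: VJ_def)
    ultimately show ?thesis by simp
  qed
qed

theorem corollary3p12:
  "\<exists>C::real. \<forall>G J. wf_game G \<and> valid_order G J \<longrightarrow>
     (\<forall>k. \<forall>l\<in>{1..Nidx G}.
        real (mR (lam G J k) (VJ G J l))
          \<le> C * real (card (verts G)) ^ ((card (verts G) + 3) * (card (players G) + 2)) \<and>
        real (mR (lam G J k) (Vge G J l))
          \<le> C * real (card (verts G)) ^ ((card (verts G) + 3) * (card (players G) + 2)))"
proof (intro exI[of _ 1] allI impI ballI)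
  fix G J k l
  assume h: "wf_game G \<and> valid_order G J" and l: "l \<in> {1..Nidx G}"
  have wf: "wf_game G" and vo: "valid_order G J" using h by auto
  have fV: "finite (verts G)" using wf by (simp add: wf_game_def)
  let ?K = "card (verts G) ^ ((card (verts G) + 3) * (card (players G) + 2))"
  have gen: "real (mR (lam G J k) S) \<le> 1 * real (card (verts G)) ^ ((card (verts G) + 3) * (card (players G) + 2))"
    if "finite S" "S \<subseteq> XV G" for S
  proof -
    have "mR (lam G J k) S \<le> ?K"
      using mR_le[OF that(1)] lam_bound[OF wf] that(2) by blast
    then have "real (mR (lam G J k) S) \<le> real ?K" by linarith
    then show ?thesis by simp
  qed
  have ms: "\<And>m. m \<in> {l..Nidx G} \<Longrightarrow> m \<in> {1..Nidx G}" using l by auto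
  have "Vge G J l \<subseteq> XV G" unfolding Vge_def using VJ_sub(1)[OF vo ms] by blast
  moreover have "finite (Vge G J l)" unfolding Vge_def using VJ_sub(2)[OF vo ms fV] by blast
  moreover have "VJ G J l \<subseteq> XV G" "finite (VJ G J l)" using VJ_sub[OF vo l] fV by auto
  ultimately show "real (mR (lam G J k) (VJ G J l))
          \<le> 1 * real (card (verts G)) ^ ((card (verts G) + 3) * (card (players G) + 2)) \<and>
        real (mR (lam G J k) (Vge G J l))
          \<le> 1 * real (card (verts G)) ^ ((card (verts G) + 3) * (card (players G) + 2))"
    using gen by blast
qed


end
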